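(* For each integer $n\ge0$ let $$f_n(x)=\frac{2}{\sqrt{\pi}}\sum_{k=0}^{n} c_{n,k}\,x^{k+1}\Big[p(k,0)+(-1)^k p(k,x)e^{-x^2}\Big]$$ and $\varepsilon_n(x)=\operatorname{erf}(x)-f_n(x)$. Then for every fixed $x>0$, $$\lim_{n\to\infty}\varepsilon_n'(x)=0,\qquad \lim_{n\to\infty}\varepsilon_n(x)=0,\qquad \lim_{n\to\infty}f_n(x)=\operatorname{erf}(x).$$ The convergence of $f_n$ to $\operatorname{erf}$ on $x>0$ is not uniform.
   Context: $\operatorname{erf}(x)=\frac{2}{\sqrt{\pi}}\int_0^x e^{-\lambda^2}\,d\lambda$. For integers $0\le k\le n$, $c_{n,k}=\frac{n!}{(n-k)!\,(k+1)!}\cdot\frac{(2n+1-k)!}{2\,(2n+1)!}$. The polynomials $p(k,x)$ are defined recursively by $p(0,x)=1$ and $p(k,x)=\frac{d}{dx}p(k-1,x)-2x\,p(k-1,x)$ for $k\ge1$. *)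

theory Defs
  imports "HOL-Analysis.Analysis" "HOL-Computational_Algebra.Polynomial"
begin

definition erf :: "real \<Rightarrow> real" where
  "erf x = 2 / sqrt pi *
     (if 0 \<le> x then integral {0..x} (\<lambda>t. exp (- (t^2)))
      else - integral {x..0} (\<lambda>t. exp (- (t^2))))"

definition c_coef :: "nat \<Rightarrow> nat \<Rightarrow> real" where
  "c_coef n k = fact n / (fact (n - k) * fact (k + 1)) *
                (fact (2 * n + 1 - k) / (2 * fact (2 * n + 1)))"

fun p_poly :: "nat \<Rightarrow> real poly" where
  "p_poly 0 = 1"
| "p_poly (Suc k) = pderiv (p_poly k) - [:0, 2:] * p_poly k"

definition p :: "nat \<Rightarrow> real \<Rightarrow> real" where
  "p k x = poly (p_poly k) x"

definition f_approx :: "nat \<Rightarrow> real \<Rightarrow> real" where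
  "f_approx n x = 2 / sqrt pi *
     (\<Sum>k=0..n. c_coef n k * x ^ (k + 1) *
        (p k 0 + (-1) ^ k * p k x * exp (- (x^2))))"

definition eps_err :: "nat \<Rightarrow> real \<Rightarrow> real" where
  "eps_err n x = erf x - f_approx n x"

end

theory Submission
  imports Defs "HOL-Complex_Analysis.Complex_Analysis" "HOL-Real_Asymp.Real_Asymp"
    "HOL-Computational_Algebra.Fundamental_Theorem_Algebra"
begin

definition GG :: "nat \<Rightarrow> real \<Rightarrow> real" where
  "GG m t = p m t * exp (- (t^2))"

lemma GG_deriv: "(GG m has_real_derivative GG (Suc m) t) (at t)"
proof -
  have "((\<lambda>t. poly (p_poly m) t * exp (- (t^2))) has_real_derivative
      poly (pderiv (p_poly m)) t * exp (- (t^2)) + poly (p_poly m) t * (exp (- (t^2)) * (- (2 * t)))) (at t)"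
    by (auto intro!: derivative_eq_intros)
  moreover have "poly (pderiv (p_poly m)) t * exp (- (t^2)) + poly (p_poly m) t * (exp (- (t^2)) * (- (2 * t)))
      = GG (Suc m) t"
    by (simp add: GG_def p_def algebra_simps)
  ultimately show ?thesis unfolding GG_def p_def by simp
qed

lemma GG_0: "GG 0 t = exp (- (t^2))" by (simp add: GG_def p_def)
lemma GG_at0: "GG k 0 = p k 0" by (simp add: GG_def)

lemma cont_GG: "continuous_on S (GG m)"
  unfolding GG_def p_def by (intro continuous_intros)

definition cP :: "nat \<Rightarrow> complex poly" where "cP m = map_poly of_real (p_poly m)"

lemma cP_Suc: "cP (Suc m) = pderiv (cP m) - [:0,2:] * cP m"
  by (rule poly_eqI) (auto simp: cP_def coeff_map_poly coeff_pderiv coeff_pCons mult_pCons_left split: nat.splits)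

lemma poly_map_of_real: "poly (map_poly of_real q) (of_real t :: complex) = of_real (poly q t)"
  by (induction q) (auto simp: map_poly_pCons)

lemma poly_cP_real: "poly (cP m) (of_real t) = of_real (p m t)"
  unfolding cP_def p_def by (rule poly_map_of_real)

definition cG :: "nat \<Rightarrow> complex \<Rightarrow> complex" where
  "cG m z = poly (cP m) z * exp (- (z^2))"

lemma cG_deriv: "(cG m has_field_derivative cG (Suc m) z) (at z)"
proof -
  have "((\<lambda>z. poly (cP m) z * exp (- (z^2))) has_field_derivative
      poly (pderiv (cP m)) z * exp (- (z^2)) + poly (cP m) z * (exp (- (z^2)) * (- (2 * z)))) (at z)"
    by (auto intro!: derivative_eq_intros)
  moreover have "poly (pderiv (cP m)) z * exp (- (z^2)) + poly (cP m) z * (exp (- (z^2)) * (- (2 * z)))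
      = cG (Suc m) z"
    by (simp add: cG_def cP_Suc algebra_simps)
  ultimately show ?thesis unfolding cG_def by simp
qed

lemma deriv_iter: "(deriv ^^ m) (\<lambda>z. exp (- (z^2))) = cG m"
proof (induction m)
  case 0
  then show ?case by (auto simp: cG_def cP_def fun_eq_iff)
next
  case (Suc m)
  have "(deriv ^^ Suc m) (\<lambda>z. exp (- (z^2))) = deriv (cG m)" by (simp add: Suc.IH)
  then show ?case by (auto simp: fun_eq_iff intro!: DERIV_imp_deriv cG_deriv)
qed

lemma cG_real: "cG m (of_real t) = of_real (GG m t)"
  by (simp add: cG_def GG_def poly_cP_real flip: exp_of_real)

lemma GG_bound:
  assumes "R > 0"
  shows "\<bar>GG m t\<bar> \<le> fact m * exp (R^2) / R^m"
proof -
  have "norm ((deriv ^^ m) (\<lambda>z::complex. exp (- (z^2))) (of_real t)) \<le> fact m * exp (R^2) / R^m"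
  proof (rule Cauchy_inequality)
    show "(\<lambda>z. exp (- (z^2))) holomorphic_on ball (complex_of_real t) R"
      by (intro holomorphic_intros)
    show "continuous_on (cball (complex_of_real t) R) (\<lambda>z. exp (- (z^2)))"
      by (intro continuous_intros)
    show "0 < R" by fact
    fix z :: complex assume z: "norm (of_real t - z) = R"
    have "\<bar>Im z\<bar> \<le> R"
      using abs_Im_le_cmod[of "of_real t - z"] z by simp
    hence "(Im z)^2 \<le> R^2"
      by (metis abs_le_square_iff abs_of_pos assms)
    have "norm (exp (- (z^2))) = exp (Re (- (z^2)))" by simp
    also have "Re (- (z^2)) = (Im z)^2 - (Re z)^2" by (simp add: power2_eq_square)
    also have "exp ((Im z)^2 - (Re z)^2) \<le> exp (R^2)"
      using \<open>(Im z)^2 \<le> R^2\<close> by (smt (verit) exp_le_cancel_iff zero_le_power2)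
    finally show "norm (exp (- (z^2))) \<le> exp (R^2)" .
  qed
  thus ?thesis by (simp add: deriv_iter cG_real)
qed

lemma coeff_lin_pow: "coeff ([:1,-1:]^N :: real poly) i = (-1)^i * of_nat (N choose i)"
proof (induction N arbitrary: i)
  case 0
  then show ?case by (cases i) auto
next
  case (Suc N)
  have "[:1,-1:]^Suc N = [:1,-1:] * ([:1,-1:]^N :: real poly)" by simp
  also have "coeff \<dots> i = coeff ([:1,-1:]^N) i - (if i = 0 then 0 else coeff ([:1,-1:]^N) (i - 1))"
    by (cases i) (auto simp: mult_pCons_left coeff_pCons)
  also have "\<dots> = (-1)^i * of_nat (Suc N choose i)"
    by (cases i) (auto simp: Suc.IH algebra_simps)
  finally show ?case .
qed

definition Psi :: "nat \<Rightarrow> real poly" where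
  "Psi n = monom 1 (n+1) * [:1,-1:]^(n+1)"

lemma coeff_Psi: "coeff (Psi n) j = (if j < n+1 then 0 else (-1)^(j-(n+1)) * of_nat ((n+1) choose (j-(n+1))))"
  unfolding Psi_def coeff_monom_mult coeff_lin_pow by simp

lemma poly_Psi: "poly (Psi n) s = s^(n+1) * (1-s)^(n+1)"
proof -
  have "poly [:1,-1:] s = 1 - s" by simp
  thus ?thesis by (simp only: Psi_def poly_monom poly_mult poly_power)
qed

definition Q :: "nat \<Rightarrow> nat \<Rightarrow> real \<Rightarrow> real" where
  "Q n j s = poly ((pderiv ^^ j) (Psi n)) s"

lemma Q_deriv: "(Q n j has_real_derivative Q n (Suc j) s) (at s)"
  unfolding Q_def by simp

lemma Q_at0: "Q n j 0 = fact j * coeff (Psi n) j"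
  by (simp add: Q_def poly_0_coeff_0 coeff_higher_pderiv flip: pochhammer_fact)

lemma coeff_Psi_big: "j > 2*n+2 \<Longrightarrow> coeff (Psi n) j = 0"
proof -
  assume j: "j > 2*n+2"
  have "(n+1) choose (j-(n+1)) = 0" by (rule binomial_eq_0) (use j in arith)
  thus ?thesis using j unfolding coeff_Psi by simp
qed

lemma Q_top: "Q n (2*n+2) s = fact (2*n+2) * (-1)^(n+1)"
proof -
  let ?q = "(pderiv ^^ (2*n+2)) (Psi n)"
  have eq: "?q = [:coeff ?q 0:]"
  proof (rule poly_eqI)
    fix i show "coeff ?q i = coeff [:coeff ?q 0:] i"
      unfolding coeff_higher_pderiv by (cases i) (auto simp: coeff_Psi_big)
  qed
  have "poly ?q s = poly [:coeff ?q 0:] s" using eq by metis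
  hence "Q n (2*n+2) s = coeff ?q 0" unfolding Q_def
    by (simp only: poly_pCons poly_0 mult_zero_right add_0_right)
  also have "\<dots> = pochhammer (of_nat (Suc 0)) (2*n+2) * coeff (Psi n) (0 + (2*n+2))"
    by (rule coeff_higher_pderiv)
  also have "pochhammer (of_nat (Suc 0)) (2*n+2) = (fact (2*n+2) :: real)"
    by (metis One_nat_def of_nat_1 pochhammer_fact)
  also have "coeff (Psi n) (0 + (2*n+2)) = (-1)^(n+1)"
    by (simp add: coeff_Psi)
  finally show ?thesis .
qed

lemma Q_sym: "Q n j s = (-1)^j * Q n j (1 - s)"
proof (induction j arbitrary: s)
  case 0
  then show ?case by (simp add: Q_def poly_Psi mult.commute)
next
  case (Suc j)
  have eq: "Q n j = (\<lambda>s. (-1)^j * Q n j (1 - s))" by (rule ext) (rule Suc.IH)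
  have d1: "(Q n j has_real_derivative Q n (Suc j) s) (at s)" by (rule Q_deriv)
  have dd: "((\<lambda>s. 1 - s) has_real_derivative (0 - 1)) (at s)"
    by (intro derivative_intros)
  have "((\<lambda>s. (-1)^j * Q n j (1 - s)) has_real_derivative (-1)^j * (Q n (Suc j) (1 - s) * (0 - 1))) (at s)"
    by (intro DERIV_cmult DERIV_chain2[OF Q_deriv dd])
  hence d2: "(Q n j has_real_derivative (-1)^j * (Q n (Suc j) (1 - s) * (0 - 1))) (at s)" using eq by simp
  from DERIV_unique[OF d1 d2] show ?case by (simp only: power_Suc) simp
qed

lemma Q_at1: "Q n j 1 = (-1)^j * Q n j 0"
  using Q_sym[of n j 1] by simp

lemma tele:
  fixes F :: "nat \<Rightarrow> real \<Rightarrow> real" and q :: "real poly"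
  assumes F: "\<And>i s. (F i has_real_derivative F (Suc i) s) (at s)"
  shows "((\<lambda>s. \<Sum>j<m. (-1)^j * poly ((pderiv^^j) q) s * F (m - Suc j) s) has_real_derivative
           (poly q s * F m s - (-1)^m * poly ((pderiv^^m) q) s * F 0 s)) (at s)"
proof -
  let ?a = "\<lambda>j. (-1)^j * poly ((pderiv^^j) q) s * F (m - j) s"
  have "((\<lambda>s. \<Sum>j<m. (-1)^j * poly ((pderiv^^j) q) s * F (m - Suc j) s) has_real_derivative
      (\<Sum>j<m. (-1)^j * (poly ((pderiv^^(Suc j)) q) s * F (m - Suc j) s + poly ((pderiv^^j) q) s * F (Suc (m - Suc j)) s))) (at s)"
  proof (rule DERIV_sum)
    fix j assume "j \<in> {..<m}"
    have "((\<lambda>s. poly ((pderiv^^j) q) s * F (m - Suc j) s) has_real_derivative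
      (poly ((pderiv^^(Suc j)) q) s * F (m - Suc j) s + poly ((pderiv^^j) q) s * F (Suc (m - Suc j)) s)) (at s)"
      using DERIV_mult[OF poly_DERIV[of "(pderiv^^j) q"] F[of "m - Suc j"]] by (simp add: mult.commute)
    from DERIV_cmult[OF this, of "(-1)^j"]
    show "((\<lambda>s. (-1)^j * poly ((pderiv^^j) q) s * F (m - Suc j) s) has_real_derivative
      (-1)^j * (poly ((pderiv^^(Suc j)) q) s * F (m - Suc j) s + poly ((pderiv^^j) q) s * F (Suc (m - Suc j)) s)) (at s)"
      by (simp add: mult.assoc)
  qed
  also have "(\<Sum>j<m. (-1)^j * (poly ((pderiv^^(Suc j)) q) s * F (m - Suc j) s + poly ((pderiv^^j) q) s * F (Suc (m - Suc j)) s))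
      = (\<Sum>j<m. ?a j - ?a (Suc j))"
  proof (intro sum.cong refl)
    fix j assume "j \<in> {..<m}"
    hence e: "Suc (m - Suc j) = m - j" by auto
    show "(-1)^j * (poly ((pderiv^^(Suc j)) q) s * F (m - Suc j) s + poly ((pderiv^^j) q) s * F (Suc (m - Suc j)) s)
      = ?a j - ?a (Suc j)"
      unfolding e by (simp only: diff_Suc_eq_diff_pred power_Suc) (simp add: algebra_simps)
  qed
  also have "\<dots> = ?a 0 - ?a m" by (rule sum_lessThan_telescope')
  finally show ?thesis by simp
qed

lemma alg_id:
  fixes A B C D E N y P G s t :: real
  assumes "B \<noteq> 0" "C \<noteq> 0" "D \<noteq> 0" "N + 1 \<noteq> 0" "s * s = 1" "t * t = 1"
  shows "y * (E * (t * ((N + 1) * A / (B * C))) * y^k * (- s * P - G)) / ((2 * N + 2) * D * (- s * t))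
       = A / (B * C) * (E / (2 * D)) * y^(k+1) * (P + s * G)"
proof -
  have sne: "s \<noteq> 0" "t \<noteq> 0" using assms by auto
  have N2: "2 * N + 2 \<noteq> 0" using assms by linarith
  have e: "(- s * P - G) = - s * (P + s * G)" using assms by algebra
  define den where "den = (2 * N + 2) * D * (- s * t)"
  have den: "den \<noteq> 0" unfolding den_def using sne N2 assms by auto
  have num: "y * (E * (t * ((N + 1) * A / (B * C))) * y^k * (- s * (P + s * G)))
      = A / (B * C) * (E / (2 * D)) * y^(k+1) * (P + s * G) * den"
  proof -
    have ss: "\<And>x. s * (s * x) = x" using assms(5) by (metis mult.assoc mult_1)
    show ?thesis unfolding den_def using assms sne N2 by (simp add: field_simps ss)
  qed
  show ?thesis unfolding e den_def[symmetric] num using den by simp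
qed

lemma term_id:
  fixes y P G :: real
  assumes "k \<le> n"
  shows "y * (fact (2*n+1-k) * ((-1)^(n-k) * of_nat ((n+1) choose (n-k))) * y^k * ((-1)^(2*n+1-k) * P - G))
           / (fact (2*n+2) * (-1)^(n+1))
         = c_coef n k * y^(k+1) * (P + (-1)^k * G)"
proof -
  obtain a where n: "n = k + a" using assms le_Suc_ex by blast
  define s :: real where "s = (-1)^k"
  define t :: real where "t = (-1)^a"
  have s2: "s * s = 1" unfolding s_def by (simp flip: power_add add: power_mult_distrib[symmetric])
  have t2: "t * t = 1" unfolding t_def by (simp flip: power_add add: power_mult_distrib[symmetric])
  have e1: "(-1::real)^(2*n+1-k) = - s" "(-1::real)^(n-k) = t" "(-1::real)^(n+1) = - s * t"
    using n by (auto simp: s_def t_def power_add power_mult)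
  have ch: "real ((n+1) choose (n-k)) = fact (n+1) / (fact (n-k) * fact (k+1))"
    using n by (subst binomial_fact) (auto simp: Suc_diff_le)
  have f1: "fact (n+1) = (real n + 1) * fact n" by simp
  have f2: "fact (2*n+2) = (2 * real n + 2) * (fact (2*n+1) :: real)"
  proof -
    have "fact (2*n+2) = fact (Suc (2*n+1))" by simp
    also have "\<dots> = real (Suc (2*n+1)) * fact (2*n+1)" by (rule fact_Suc)
    finally show ?thesis by simp
  qed
  have "y * (fact (2*n+1-k) * (t * ((real n + 1) * fact n / (fact (n-k) * fact (k+1)))) * y^k * (- s * P - G))
           / ((2 * real n + 2) * fact (2*n+1) * (- s * t))
         = fact n / (fact (n-k) * fact (k+1)) * (fact (2*n+1-k) / (2 * fact (2*n+1))) * y^(k+1) * (P + s * G)"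
    by (rule alg_id) (use s2 t2 in auto)
  thus ?thesis unfolding e1 ch f1 f2 c_coef_def s_def .
qed

lemma Hsum_lemma:
  fixes y :: real and n :: nat
  defines "m \<equiv> 2*n+2"
  defines "F \<equiv> (\<lambda>(i::nat) (s::real). y^i * GG i (y * s))"
  defines "H \<equiv> (\<lambda>s. \<Sum>j<m. (-1)^j * poly ((pderiv^^j) (Psi n)) s * F (m - Suc j) s)"
  defines "c0 \<equiv> fact m * (-1::real)^(n+1)"
  shows "y * (H 0 - H 1) / c0 = (\<Sum>k=0..n. c_coef n k * y^(k+1) * (p k 0 + (-1)^k * p k y * exp (- (y^2))))"
proof -
  define T where "T k = Q n (m - Suc k) 0 * y^k * ((-1)^(m - Suc k) * p k 0 - GG k y)" for k
  have "H 0 - H 1 = (\<Sum>j<m. (-1)^j * Q n j 0 * F (m - Suc j) 0 - (-1)^j * Q n j 1 * F (m - Suc j) 1)"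
    unfolding H_def Q_def by (simp add: sum_subtractf)
  also have "\<dots> = (\<Sum>j<m. T (m - Suc j))"
  proof (intro sum.cong refl)
    fix j assume j: "j \<in> {..<m}"
    hence e: "m - Suc (m - Suc j) = j" by auto
    have s: "(-1::real)^j * (-1)^j = 1" by (simp flip: power_add add: power_mult_distrib[symmetric])
    show "(-1)^j * Q n j 0 * F (m - Suc j) 0 - (-1)^j * Q n j 1 * F (m - Suc j) 1 = T (m - Suc j)"
    proof -
      have q1: "(-1)^j * Q n j 1 = Q n j 0" unfolding Q_at1 by (simp add: s flip: mult.assoc)
      show ?thesis unfolding T_def e F_def q1 by (simp add: GG_at0 algebra_simps)
    qed
  qed
  also have "\<dots> = (\<Sum>k<m. T k)" by (rule sum.nat_diff_reindex)
  also have "\<dots> = (\<Sum>k=0..n. T k)"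
  proof (rule sum.mono_neutral_right)
    show "finite {..<m}" by simp
    show "{0..n} \<subseteq> {..<m}" unfolding m_def by auto
    show "\<forall>k\<in>{..<m} - {0..n}. T k = 0"
    proof
      fix k assume "k \<in> {..<m} - {0..n}"
      hence "m - Suc k < n + 1" unfolding m_def by auto
      thus "T k = 0" unfolding T_def Q_at0 coeff_Psi by simp
    qed
  qed
  finally have HH: "H 0 - H 1 = (\<Sum>k=0..n. T k)" .
  have "y * (H 0 - H 1) / c0 = (\<Sum>k=0..n. y * T k / c0)"
    unfolding HH by (simp add: sum_distrib_left sum_divide_distrib)
  also have "\<dots> = (\<Sum>k=0..n. c_coef n k * y^(k+1) * (p k 0 + (-1)^k * p k y * exp (- (y^2))))"
  proof (intro sum.cong refl)
    fix k assume k: "k \<in> {0..n}"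
    hence e: "2*n+2 - Suc k = 2*n+1-k" "\<not> (2*n+1-k < n+1)" "2*n+1-k - (n+1) = n - k" unfolding m_def by auto
    have "y * T k / c0 = y * (fact (2*n+1-k) * ((-1)^(n-k) * of_nat ((n+1) choose (n-k))) * y^k * ((-1)^(2*n+1-k) * p k 0 - GG k y))
           / (fact (2*n+2) * (-1)^(n+1))"
      unfolding T_def c0_def m_def e(1) Q_at0 coeff_Psi by (simp only: if_False e)
    also have "\<dots> = c_coef n k * y^(k+1) * (p k 0 + (-1)^k * GG k y)"
      by (rule term_id) (use k in auto)
    finally show "y * T k / c0 = c_coef n k * y^(k+1) * (p k 0 + (-1)^k * p k y * exp (- (y^2)))"
      by (simp add: GG_def mult.assoc)
  qed
  finally show ?thesis .
qed

definition Kint :: "nat \<Rightarrow> real \<Rightarrow> real" where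
  "Kint n y = integral {0..1} (\<lambda>s. y^(2*n+3) * poly (Psi n) s * GG (2*n+2) (y * s))"

lemma div_sign:
  fixes x f s :: real
  assumes "s * s = 1"
  shows "x / (f * s) = s / f * x"
proof (cases "f = 0")
  case False
  have sn: "s \<noteq> 0" using assms by auto
  have ss: "\<And>z. s * (s * z) = z" using assms by (metis mult.assoc mult_1)
  show ?thesis using False sn by (simp add: field_simps ss)
qed simp

lemma main_id:
  fixes y :: real and n :: nat
  assumes y: "y > 0"
  shows "eps_err n y = 2 / sqrt pi * ((-1)^(n+1) / fact (2*n+2)) * Kint n y"
proof -
  define m where "m = 2*n+2"
  define F where "F = (\<lambda>(i::nat) (s::real). y^i * GG i (y * s))"
  define H where "H = (\<lambda>s. \<Sum>j<m. (-1)^j * poly ((pderiv^^j) (Psi n)) s * F (m - Suc j) s)"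
  define c0 where "c0 = fact m * (-1::real)^(n+1)"
  have Fd: "(F i has_real_derivative F (Suc i) s) (at s)" for i s
  proof -
    have d: "((\<lambda>s. y * s) has_real_derivative y) (at s)" by (auto intro!: derivative_eq_intros)
    have "((\<lambda>s. y^i * GG i (y * s)) has_real_derivative y^i * (GG (Suc i) (y * s) * y)) (at s)"
      by (intro DERIV_cmult DERIV_chain2[OF GG_deriv d])
    thus ?thesis unfolding F_def by (simp add: mult_ac)
  qed
  have cF: "continuous_on S (F i)" for S i
    unfolding F_def GG_def p_def by (intro continuous_intros)
  have Hd: "(H has_real_derivative (poly (Psi n) s * F m s - c0 * F 0 s)) (at s)" for s
  proof -
    have m1: "(-1::real)^m = 1" unfolding m_def by simp
    have qm: "poly ((pderiv^^m) (Psi n)) s = c0"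
      using Q_top[of n s] unfolding Q_def m_def c0_def .
    show ?thesis using tele[where F=F and m=m and q="Psi n" and s=s, OF Fd] unfolding H_def m1 qm by simp
  qed
  have ftc: "((\<lambda>s. poly (Psi n) s * F m s - c0 * F 0 s) has_integral (H 1 - H 0)) {0..1}"
    by (rule fundamental_theorem_of_calculus)
       (auto simp: has_real_derivative_iff_has_vector_derivative[symmetric] intro: has_field_derivative_at_within Hd)
  have int1: "(\<lambda>s. poly (Psi n) s * F m s) integrable_on {0..1}"
    by (intro integrable_continuous_interval continuous_intros cF)
  have int0: "(\<lambda>s. c0 * F 0 s) integrable_on {0..1}"
    by (intro integrable_continuous_interval continuous_intros cF)
  have "H 1 - H 0 = integral {0..1} (\<lambda>s. poly (Psi n) s * F m s - c0 * F 0 s)"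
    using ftc by (simp add: integral_unique)
  also have "\<dots> = integral {0..1} (\<lambda>s. poly (Psi n) s * F m s) - integral {0..1} (\<lambda>s. c0 * F 0 s)"
    by (rule integral_diff[OF int1 int0])
  also have "integral {0..1} (\<lambda>s. c0 * F 0 s) = c0 * integral {0..1} (F 0)"
    by (rule integral_mult_right)
  finally have I: "H 1 - H 0 = integral {0..1} (\<lambda>s. poly (Psi n) s * F m s) - c0 * integral {0..1} (F 0)" .
  have img: "(\<lambda>x. x / y) ` {0..y} = {0..1}"
  proof safe
    fix x assume "x \<in> {0..y}" thus "x / y \<in> {0..1}" using y by auto
  next
    fix u :: real assume "u \<in> {0..1}"
    thus "u \<in> (\<lambda>x. x / y) ` {0..y}"
      using y by (intro image_eqI[where x="u*y"]) (auto simp: mult_le_cancel_right2)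
  qed
  have "integral ((\<lambda>x. x / y) ` {0..y}) (\<lambda>s. (\<lambda>t. exp (- (t^2))) (y * s))
      = (1 / \<bar>y\<bar>) *\<^sub>R integral {0..y} (\<lambda>t. exp (- (t^2)))"
    by (rule integral_stretch_real) (use y in auto)
  hence G0: "integral {0..1} (F 0) = integral {0..y} (\<lambda>t. exp (- (t^2))) / y"
    unfolding img using y by (simp add: F_def GG_0)
  have K: "Kint n y = y * integral {0..1} (\<lambda>s. poly (Psi n) s * F m s)"
  proof -
    have "(\<lambda>s. y^(2*n+3) * poly (Psi n) s * GG (2*n+2) (y * s)) = (\<lambda>s. y * (poly (Psi n) s * F m s))"
    proof (rule ext)
      fix s
      have "(2*n+3) = Suc (2*n+2)" by simp
      hence yp: "y^(2*n+3) = y * y^(2*n+2)" by (simp only: power_Suc)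
      show "y^(2*n+3) * poly (Psi n) s * GG (2*n+2) (y * s) = y * (poly (Psi n) s * F m s)"
        unfolding yp F_def m_def by (simp only: mult_ac)
    qed
    thus ?thesis unfolding Kint_def by (simp add: integral_mult_right)
  qed
  have c0nz: "c0 \<noteq> 0" unfolding c0_def by simp
  have HS: "y * (H 0 - H 1) / c0 = (\<Sum>k=0..n. c_coef n k * y^(k+1) * (p k 0 + (-1)^k * p k y * exp (- (y^2))))"
    unfolding H_def F_def c0_def m_def by (rule Hsum_lemma)
  have Gint: "integral {0..y} (\<lambda>t. exp (- (t^2))) = (Kint n y + y * (H 0 - H 1)) / c0"
  proof -
    have "c0 * integral {0..y} (\<lambda>t. exp (- (t^2))) = y * (c0 * integral {0..1} (F 0))"
      using G0 y by simp
    also have "c0 * integral {0..1} (F 0) = integral {0..1} (\<lambda>s. poly (Psi n) s * F m s) - (H 1 - H 0)"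
      using I by simp
    also have "y * (integral {0..1} (\<lambda>s. poly (Psi n) s * F m s) - (H 1 - H 0)) = Kint n y + y * (H 0 - H 1)"
      unfolding K by (simp add: algebra_simps)
    finally show ?thesis using c0nz by (simp add: field_simps)
  qed
  have "eps_err n y = 2 / sqrt pi * (integral {0..y} (\<lambda>t. exp (- (t^2))) - y * (H 0 - H 1) / c0)"
    unfolding eps_err_def f_approx_def erf_def HS using y by (simp add: algebra_simps)
  also have "\<dots> = 2 / sqrt pi * (Kint n y / c0)"
    unfolding Gint using c0nz by (simp add: field_simps)
  also have "Kint n y / c0 = ((-1)^(n+1) / fact (2*n+2)) * Kint n y"
    unfolding c0_def m_def by (rule div_sign) (simp flip: power_add add: power_mult_distrib[symmetric])
  finally show ?thesis by simp
qed

lemma Psi_bound: "s \<in> {0..1} \<Longrightarrow> \<bar>poly (Psi n) s\<bar> \<le> 1"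
  unfolding poly_Psi
  by (auto simp: abs_mult intro!: mult_le_one power_le_one)

lemma GG_bound2:
  assumes "y > 0"
  shows "\<bar>GG k t\<bar> \<le> fact k * exp (4 * y^2) / (2*y)^k"
  using GG_bound[of "2*y" k t] assms by (simp add: power_mult_distrib)

lemma cont_Kint_integrand: "continuous_on S (\<lambda>s. y^(2*n+3) * poly (Psi n) s * GG (2*n+2) (y * s))"
  unfolding GG_def p_def by (intro continuous_intros)

lemma eps_bound:
  assumes y: "y > 0"
  shows "\<bar>eps_err n y\<bar> \<le> 2 / sqrt pi * (y * exp (4 * y^2)) / 2^(2*n+2)"
proof -
  define m where "m = 2*n+2"
  define E where "E = exp (4 * y^2)"
  have "norm (Kint n y) \<le> (y^(2*n+3) * (fact m * E / (2*y)^m)) * (1 - 0)"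
    unfolding Kint_def
  proof (rule integral_bound)
    show "continuous_on {0..1} (\<lambda>s. y^(2*n+3) * poly (Psi n) s * GG (2*n+2) (y * s))"
      by (rule cont_Kint_integrand)
    fix t :: real assume t: "t \<in> {0..1}"
    have "\<bar>y^(2*n+3) * poly (Psi n) t * GG (2*n+2) (y * t)\<bar> = y^(2*n+3) * \<bar>poly (Psi n) t\<bar> * \<bar>GG m (y * t)\<bar>"
      using y by (simp add: abs_mult m_def)
    also have "\<dots> \<le> y^(2*n+3) * 1 * (fact m * E / (2*y)^m)"
      using Psi_bound[OF t, of n] GG_bound2[OF y, of m "y*t"] y unfolding E_def
      by (intro mult_mono) auto
    finally show "norm (y^(2*n+3) * poly (Psi n) t * GG (2*n+2) (y * t)) \<le> y^(2*n+3) * (fact m * E / (2*y)^m)"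
      by simp
  qed simp
  hence K: "\<bar>Kint n y\<bar> \<le> y^(2*n+3) * (fact m * E / (2*y)^m)" by simp
  have "\<bar>eps_err n y\<bar> = 2 / sqrt pi * (1 / fact m) * \<bar>Kint n y\<bar>"
    unfolding main_id[OF y] m_def by (simp add: abs_mult)
  also have "\<dots> \<le> 2 / sqrt pi * (1 / fact m) * (y^(2*n+3) * (fact m * E / (2*y)^m))"
    by (intro mult_left_mono K) auto
  also have "\<dots> = 2 / sqrt pi * (y * E) / 2^m"
  proof -
    have "2*n+3 = Suc m" unfolding m_def by simp
    hence yp: "y^(2*n+3) = y * y^m" by (simp only: power_Suc)
    have ym: "y^m \<noteq> 0" using y by simp
    have fm: "fact m \<noteq> (0::real)" by simp
    show ?thesis unfolding yp power_mult_distrib using ym fm by (simp add: field_simps)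
  qed
  also have "\<dots> = 2 / sqrt pi * (y * E) / 2^(2*n+2)" unfolding m_def ..
  finally show ?thesis unfolding E_def .
qed

lemma eps_tendsto:
  assumes y: "y > 0"
  shows "(\<lambda>n. eps_err n y) \<longlonglongrightarrow> 0"
proof (rule Lim_null_comparison)
  show "\<forall>\<^sub>F n in sequentially. norm (eps_err n y) \<le> 2 / sqrt pi * (y * exp (4 * y^2)) / 2^(2*n+2)"
    using eps_bound[OF y] by simp
  show "(\<lambda>n. 2 / sqrt pi * (y * exp (4 * y^2)) / 2^(2*n+2)) \<longlonglongrightarrow> 0"
    by real_asymp
qed

definition fx :: "nat \<Rightarrow> real \<Rightarrow> real \<Rightarrow> real" where
  "fx n x t = (2*n+3) * x^(2*n+2) * poly (Psi n) t * GG (2*n+2) (x * t)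
             + x^(2*n+3) * poly (Psi n) t * (GG (Suc (2*n+2)) (x * t) * t)"

definition Kd :: "nat \<Rightarrow> real \<Rightarrow> real" where
  "Kd n y = integral {0..1} (fx n y)"

lemma Kint_deriv:
  assumes y: "y > 0"
  shows "(Kint n has_real_derivative Kd n y) (at y)"
proof -
  have "((\<lambda>x. integral (cbox 0 1) (\<lambda>t. x^(2*n+3) * poly (Psi n) t * GG (2*n+2) (x * t)))
         has_field_derivative integral (cbox 0 1) (fx n y)) (at y within {0<..})"
  proof (rule leibniz_rule_field_derivative)
    fix x t :: real assume x: "x \<in> {0<..}" and t: "t \<in> cbox 0 1"
    have d1: "((\<lambda>x. x^(2*n+3) * poly (Psi n) t) has_real_derivative (real (2*n+3) * x^(2*n+2)) * poly (Psi n) t) (at x)"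
    proof (rule DERIV_cmult_right)
      show "((\<lambda>x. x^(2*n+3)) has_real_derivative real (2*n+3) * x^(2*n+2)) (at x)"
        using DERIV_pow[of "2*n+3" x] by simp
    qed
    have dl: "((\<lambda>x. x * t) has_real_derivative t) (at x)" by (auto intro!: derivative_eq_intros)
    have d2: "((\<lambda>x. GG (2*n+2) (x * t)) has_real_derivative GG (Suc (2*n+2)) (x * t) * t) (at x)"
      by (rule DERIV_chain2[OF GG_deriv dl])
    have "((\<lambda>x. x^(2*n+3) * poly (Psi n) t * GG (2*n+2) (x * t)) has_real_derivative fx n x t) (at x)"
      by (rule DERIV_cong[OF DERIV_mult'[OF d1 d2]]) (simp add: fx_def algebra_simps)
    thus "((\<lambda>x. x^(2*n+3) * poly (Psi n) t * GG (2*n+2) (x * t)) has_real_derivative fx n x t) (at x within {0<..})"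
      by (rule has_field_derivative_at_within)
  next
    fix x :: real
    show "(\<lambda>t. x^(2*n+3) * poly (Psi n) t * GG (2*n+2) (x * t)) integrable_on cbox 0 1"
      unfolding box_real by (intro integrable_continuous_interval cont_Kint_integrand)
  next
    have "(\<lambda>(x, t). fx n x t) = (\<lambda>z. fx n (fst z) (snd z))" by (auto simp: fun_eq_iff)
    moreover have "continuous_on ({0<..} \<times> cbox 0 1) (\<lambda>z. fx n (fst z) (snd z))"
      unfolding fx_def GG_def p_def by (intro continuous_intros)
    ultimately show "continuous_on ({0<..} \<times> cbox 0 1) (\<lambda>(x, t). fx n x t)" by simp
  next
    show "y \<in> {0<..}" using y by simp
    show "convex ({0<..} :: real set)" by (rule convex_real_interval)
  qed
  hence "(Kint n has_real_derivative Kd n y) (at y within {0<..})"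
    unfolding Kint_def Kd_def box_real .
  thus ?thesis using at_within_open[of y "{0<..}"] y by simp
qed

lemma deriv_eps:
  assumes y: "y > 0"
  shows "deriv (eps_err n) y = 2 / sqrt pi * ((-1)^(n+1) / fact (2*n+2)) * Kd n y"
proof -
  have "(eps_err n has_real_derivative 2 / sqrt pi * ((-1)^(n+1) / fact (2*n+2)) * Kd n y) (at y)"
  proof (rule has_field_derivative_transform_within_open)
    show "((\<lambda>z. 2 / sqrt pi * ((-1)^(n+1) / fact (2*n+2)) * Kint n z) has_real_derivative
            2 / sqrt pi * ((-1)^(n+1) / fact (2*n+2)) * Kd n y) (at y)"
      by (rule DERIV_cmult[OF Kint_deriv[OF y]])
    show "open {0::real<..}" by simp
    show "y \<in> {0<..}" using y by simp
    fix z :: real assume "z \<in> {0<..}"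
    thus "2 / sqrt pi * ((-1)^(n+1) / fact (2*n+2)) * Kint n z = eps_err n z"
      using main_id[of z n] by simp
  qed
  thus ?thesis by (rule DERIV_imp_deriv)
qed

lemma Kd_bound:
  assumes y: "y > 0"
  shows "\<bar>Kd n y\<bar> \<le> fact (2*n+2) * exp (4 * y^2) * ((2*real n+3) / 2^(2*n+2) + (2*real n+3) / 2^(2*n+3))"
proof -
  define m where "m = 2*n+2"
  define E where "E = exp (4 * y^2)"
  have E0: "E \<ge> 0" unfolding E_def by simp
  have ym: "y^m > 0" using y by simp
  have tm: "(2::real)^m \<noteq> 0" "(2::real)^(Suc m) \<noteq> 0" "y^m \<noteq> 0" "y^(Suc m) \<noteq> 0" "y \<noteq> 0" using y by simp_all
  have b1: "(2*real n+3) * y^m * (fact m * E / (2*y)^m) = fact m * E * ((2*real n+3) / 2^m)"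
    unfolding power_mult_distrib using ym tm by (simp add: field_simps)
  have fs: "fact (Suc m) = (2*real n+3) * (fact m :: real)" unfolding m_def by (simp add: fact_Suc)
  have b2: "y^(Suc m) * (fact (Suc m) * E / (2*y)^(Suc m)) = fact m * E * ((2*real n+3) / 2^(Suc m))"
    unfolding power_mult_distrib fs using ym y tm by (simp add: field_simps)
  have "norm (integral {0..1} (fx n y)) \<le> (fact m * E * ((2*real n+3) / 2^m + (2*real n+3) / 2^(Suc m))) * (1 - 0)"
  proof (rule integral_bound)
    show "continuous_on {0..1} (fx n y)" unfolding fx_def GG_def p_def by (intro continuous_intros)
    fix t :: real assume t: "t \<in> {0..1}"
    have P: "\<bar>poly (Psi n) t\<bar> \<le> 1" by (rule Psi_bound[OF t])
    have t1: "\<bar>t\<bar> \<le> 1" using t by auto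
    have g1: "\<bar>GG m (y*t)\<bar> \<le> fact m * E / (2*y)^m" using GG_bound2[OF y] unfolding E_def .
    have g2: "\<bar>GG (Suc m) (y*t)\<bar> \<le> fact (Suc m) * E / (2*y)^(Suc m)" using GG_bound2[OF y] unfolding E_def .
    have "\<bar>fx n y t\<bar> \<le> (2*real n+3) * y^m * \<bar>poly (Psi n) t\<bar> * \<bar>GG m (y*t)\<bar>
           + y^(Suc m) * \<bar>poly (Psi n) t\<bar> * (\<bar>GG (Suc m) (y*t)\<bar> * \<bar>t\<bar>)"
    proof -
      have e3: "2*n+3 = Suc (2*n+2)" by simp
      have fxeq: "fx n y t = (2*real n+3) * y^m * poly (Psi n) t * GG m (y*t) + y^(Suc m) * poly (Psi n) t * (GG (Suc m) (y*t) * t)"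
        unfolding fx_def m_def e3 by simp
      have A: "\<bar>(2*real n+3) * y^m * poly (Psi n) t * GG m (y*t)\<bar> = (2*real n+3) * y^m * \<bar>poly (Psi n) t\<bar> * \<bar>GG m (y*t)\<bar>"
        using y by (simp add: abs_mult)
      have B: "\<bar>y^(Suc m) * poly (Psi n) t * (GG (Suc m) (y*t) * t)\<bar> = y^(Suc m) * \<bar>poly (Psi n) t\<bar> * (\<bar>GG (Suc m) (y*t)\<bar> * \<bar>t\<bar>)"
        using y by (simp add: abs_mult)
      show ?thesis unfolding fxeq using abs_triangle_ineq[of "(2*real n+3) * y^m * poly (Psi n) t * GG m (y*t)" "y^(Suc m) * poly (Psi n) t * (GG (Suc m) (y*t) * t)"]
        unfolding A B .
    qed
    also have "\<dots> \<le> (2*real n+3) * y^m * 1 * (fact m * E / (2*y)^m) + y^(Suc m) * 1 * (fact (Suc m) * E / (2*y)^(Suc m) * 1)"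
      using ym y P g1 g2 t1 by (intro add_mono mult_mono) auto
    also have "\<dots> = fact m * E * ((2*real n+3) / 2^m + (2*real n+3) / 2^(Suc m))"
      using b1 b2 by (simp add: algebra_simps)
    finally show "norm (fx n y t) \<le> fact m * E * ((2*real n+3) / 2^m + (2*real n+3) / 2^(Suc m))" by simp
  qed simp
  hence ib: "\<bar>integral {0..1} (fx n y)\<bar> \<le> fact m * E * ((2*real n+3) / 2^m + (2*real n+3) / 2^(Suc m))"
    by (simp only: diff_zero mult_1_right real_norm_def)
  have sm: "Suc m = 2*n+3" unfolding m_def by simp
  show ?thesis using ib[unfolded sm] unfolding Kd_def E_def m_def .
qed

lemma deriv_tendsto:
  assumes y: "y > 0"
  shows "(\<lambda>n. deriv (eps_err n) y) \<longlonglongrightarrow> 0"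
proof (rule Lim_null_comparison)
  define E where "E = exp (4 * y^2)"
  show "\<forall>\<^sub>F n in sequentially. norm (deriv (eps_err n) y) \<le> 2 / sqrt pi * E * ((2*real n+3) / 2^(2*n+2) + (2*real n+3) / 2^(2*n+3))"
  proof (rule always_eventually, rule allI)
    fix n
    have "norm (deriv (eps_err n) y) = 2 / sqrt pi * (1 / fact (2*n+2)) * \<bar>Kd n y\<bar>"
      unfolding deriv_eps[OF y] by (simp add: abs_mult)
    also have "\<dots> \<le> 2 / sqrt pi * (1 / fact (2*n+2)) * (fact (2*n+2) * E * ((2*real n+3) / 2^(2*n+2) + (2*real n+3) / 2^(2*n+3)))"
    proof (rule mult_left_mono)
      show "\<bar>Kd n y\<bar> \<le> fact (2*n+2) * E * ((2*real n+3) / 2^(2*n+2) + (2*real n+3) / 2^(2*n+3))"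
        using Kd_bound[OF y, of n] unfolding E_def .
    qed simp
    also have "\<dots> = 2 / sqrt pi * E * ((2*real n+3) / 2^(2*n+2) + (2*real n+3) / 2^(2*n+3))"
      by simp
    finally show "norm (deriv (eps_err n) y) \<le> 2 / sqrt pi * E * ((2*real n+3) / 2^(2*n+2) + (2*real n+3) / 2^(2*n+3))" .
  qed
  show "(\<lambda>n. 2 / sqrt pi * E * ((2*real n+3) / 2^(2*n+2) + (2*real n+3) / 2^(2*n+3))) \<longlonglongrightarrow> 0"
    by real_asymp
qed

lemma erf_bound:
  assumes x: "x > 0"
  shows "\<bar>erf x\<bar> \<le> sqrt pi"
proof -
  let ?g = "\<lambda>t::real. exp (- (t^2))"
  have ig: "?g integrable_on {0..x}" by (intro integrable_continuous_interval continuous_intros)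
  have ia: "(\<lambda>t::real. inverse (1 + t^2)) integrable_on {0..x}"
  proof -
    have "\<And>t::real. 1 + t^2 \<noteq> 0" by (smt (verit) zero_le_power2)
    thus ?thesis by (intro integrable_continuous_interval continuous_intros) auto
  qed
  have nn: "0 \<le> integral {0..x} ?g"
  proof -
    have "integral {0..x} (\<lambda>_. 0) \<le> integral {0..x} ?g" by (rule integral_le[OF integrable_0 ig]) simp
    thus ?thesis by simp
  qed
  have le: "integral {0..x} ?g \<le> integral {0..x} (\<lambda>t::real. inverse (1 + t^2))"
  proof (rule integral_le[OF ig ia])
    fix t :: real
    have "1 + t^2 \<le> exp (t^2)" by (rule exp_ge_add_one_self)
    hence "inverse (exp (t^2)) \<le> inverse (1 + t^2)"
      by (intro le_imp_inverse_le) (auto simp: add_pos_nonneg)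
    thus "?g t \<le> inverse (1 + t^2)" by (simp add: exp_minus)
  qed
  have "((\<lambda>t::real. inverse (1 + t^2)) has_integral (arctan x - arctan 0)) {0..x}"
    by (rule fundamental_theorem_of_calculus)
       (use x in \<open>auto simp: has_real_derivative_iff_has_vector_derivative[symmetric] intro: has_field_derivative_at_within DERIV_arctan\<close>)
  hence "integral {0..x} (\<lambda>t::real. inverse (1 + t^2)) = arctan x" by (simp add: integral_unique)
  with le arctan_ubound[of x] have "integral {0..x} ?g \<le> pi / 2" by simp
  hence I2: "integral {0..x} ?g \<le> pi / 2" .
  have ex: "erf x = 2 / sqrt pi * integral {0..x} ?g" using x by (simp add: erf_def)
  have "erf x \<le> 2 / sqrt pi * (pi / 2)" unfolding ex by (rule mult_left_mono[OF I2]) simp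
  moreover have "0 \<le> erf x" unfolding ex using nn by simp
  moreover have "2 / sqrt pi * (pi / 2) = sqrt pi"
  proof -
    have "2 / sqrt pi * (pi / 2) = pi / sqrt pi" by simp
    also have "\<dots> = sqrt pi" by (rule real_div_sqrt) simp
    finally show ?thesis .
  qed
  ultimately show ?thesis by simp
qed

lemma mon_exp_tendsto: "((\<lambda>x::real. x^N * exp (- (x^2))) \<longlongrightarrow> 0) at_top"
proof (rule tendsto_sandwich[of "\<lambda>_. 0" _ _ "\<lambda>x. x^N / exp x"])
  show "\<forall>\<^sub>F x in at_top. 0 \<le> (x::real)^N * exp (- (x^2))"
    using eventually_ge_at_top[of "0::real"] by (rule eventually_mono) simp
  show "\<forall>\<^sub>F x in at_top. (x::real)^N * exp (- (x^2)) \<le> x^N / exp x"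
  proof (rule eventually_at_top_linorderI[of "1::real"])
    fix x :: real assume elim: "1 \<le> x"
    have "x \<le> x^2" using elim by (simp add: power2_eq_square)
    hence "exp (- (x^2)) \<le> exp (- x)" by simp
    hence "x^N * exp (- (x^2)) \<le> x^N * exp (- x)" using elim by (intro mult_left_mono) auto
    thus "x^N * exp (- (x^2)) \<le> x^N / exp x" by (simp add: exp_minus divide_inverse)
  qed
  show "((\<lambda>_. 0) \<longlongrightarrow> (0::real)) at_top" by simp
  show "((\<lambda>x. x^N / exp x) \<longlongrightarrow> (0::real)) at_top" by (rule tendsto_power_div_exp_0)
qed

lemma monGG_tendsto: "((\<lambda>x::real. x^j * (p k x * exp (- (x^2)))) \<longlongrightarrow> 0) at_top"
proof -
  have eq: "(\<lambda>x::real. x^j * (p k x * exp (- (x^2)))) = (\<lambda>x. \<Sum>i\<le>degree (p_poly k). coeff (p_poly k) i * (x^(i+j) * exp (- (x^2))))"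
    by (rule ext) (simp add: p_def poly_altdef sum_distrib_left sum_distrib_right power_add mult_ac)
  show ?thesis unfolding eq
    by (rule tendsto_null_sum) (intro tendsto_mult_right_zero mon_exp_tendsto)
qed

definition Pp :: "nat \<Rightarrow> real poly" where
  "Pp n = (\<Sum>k\<in>{0..n}. monom (c_coef n k * p k 0) k)"

definition Rr :: "nat \<Rightarrow> real \<Rightarrow> real" where
  "Rr n x = (\<Sum>k\<in>{0..n}. c_coef n k * (-1)^k * (x^(k+1) * (p k x * exp (- (x^2)))))"

lemma f_split: "f_approx n x = 2 / sqrt pi * (poly (pCons 0 (Pp n)) x + Rr n x)"
proof -
  have "poly (pCons 0 (Pp n)) x = (\<Sum>k\<in>{0..n}. c_coef n k * x^(k+1) * p k 0)"
    by (simp add: Pp_def poly_sum poly_monom sum_distrib_left mult_ac)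
  thus ?thesis
    unfolding f_approx_def Rr_def by (simp add: sum.distrib[symmetric] algebra_simps)
qed

lemma Pp_nz: "Pp n \<noteq> 0"
proof -
  have "coeff (Pp n) 0 = (\<Sum>k\<in>{0..n}. if k = 0 then c_coef n k * p k 0 else 0)"
    unfolding Pp_def coeff_sum by (intro sum.cong refl) (simp add: coeff_monom)
  also have "\<dots> = c_coef n 0 * p 0 0" by (simp add: sum.delta)
  also have "\<dots> = 1 / 2" by (simp add: c_coef_def p_def)
  finally show ?thesis by (metis coeff_0 zero_neq_numeral divide_eq_0_iff one_neq_zero)
qed

lemma Rr_tendsto: "(Rr n \<longlongrightarrow> 0) at_top"
  unfolding Rr_def
  by (rule tendsto_null_sum) (intro tendsto_mult_right_zero monGG_tendsto)

lemma nonuniform: "\<not> uniform_limit {0<..} f_approx erf sequentially"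
proof
  assume U: "uniform_limit {0<..} f_approx erf sequentially"
  from uniform_limitD[OF U, of 1] obtain N where
    hN: "\<And>n. n \<ge> N \<Longrightarrow> \<forall>x\<in>{0<..}. dist (f_approx n x) (erf x) < 1"
    by (auto simp: eventually_sequentially)
  define n where "n = N"
  have fb: "\<bar>f_approx n x\<bar> < 1 + sqrt pi" if "x > 0" for x
  proof -
    have "\<bar>f_approx n x - erf x\<bar> < 1" using hN[of n] that by (auto simp: n_def dist_real_def)
    moreover have "\<bar>erf x\<bar> \<le> sqrt pi" by (rule erf_bound[OF that])
    ultimately show ?thesis by linarith
  qed
  define d where "d = sqrt pi / 2 * (1 + sqrt pi) + 1"
  obtain r where r: "\<And>z. r \<le> norm z \<Longrightarrow> d \<le> norm (poly (pCons 0 (Pp n)) z)"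
    using poly_infinity[OF Pp_nz, of d 0] by blast
  have "\<forall>\<^sub>F x in at_top. dist (Rr n x) 0 < 1" by (rule tendstoD[OF Rr_tendsto]) simp
  then obtain M where M: "\<And>x. x \<ge> M \<Longrightarrow> \<bar>Rr n x\<bar> < 1"
    by (auto simp: eventually_at_top_linorder)
  define x where "x = max M (max r 1)"
  have x0: "x > 0" unfolding x_def by simp
  have "d \<le> \<bar>poly (pCons 0 (Pp n)) x\<bar>" using r[of x] unfolding x_def by auto
  moreover have "\<bar>Rr n x\<bar> < 1" using M[of x] unfolding x_def by simp
  ultimately have "d - 1 \<le> \<bar>poly (pCons 0 (Pp n)) x + Rr n x\<bar>" by linarith
  hence "2 / sqrt pi * (d - 1) \<le> 2 / sqrt pi * \<bar>poly (pCons 0 (Pp n)) x + Rr n x\<bar>"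
    by (rule mult_left_mono) simp
  also have "\<dots> = \<bar>f_approx n x\<bar>" unfolding f_split by (subst abs_mult) simp
  also have "2 / sqrt pi * (d - 1) = 1 + sqrt pi" unfolding d_def by simp
  finally show False using fb[OF x0] by simp
qed

theorem theorem2p2:
  shows "(\<forall>x::real. x > 0 \<longrightarrow>
            ((\<lambda>n. deriv (eps_err n) x) \<longlonglongrightarrow> 0) \<and>
            ((\<lambda>n. eps_err n x) \<longlonglongrightarrow> 0) \<and>
            ((\<lambda>n. f_approx n x) \<longlonglongrightarrow> erf x)) \<and>
         \<not> uniform_limit {0<..} f_approx erf sequentially"
proof (intro conjI allI impI)
  fix x :: real assume x: "x > 0"
  show "(\<lambda>n. deriv (eps_err n) x) \<longlonglongrightarrow> 0" by (rule deriv_tendsto[OF x])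
  show "(\<lambda>n. eps_err n x) \<longlonglongrightarrow> 0" by (rule eps_tendsto[OF x])
  have "(\<lambda>n. erf x - eps_err n x) \<longlonglongrightarrow> erf x - 0"
    by (intro tendsto_diff tendsto_const eps_tendsto[OF x])
  thus "(\<lambda>n. f_approx n x) \<longlonglongrightarrow> erf x" by (simp add: eps_err_def)
next
  show "\<not> uniform_limit {0<..} f_approx erf sequentially" by (rule nonuniform)
qed

end
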